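(* For all positive integers $n,q,d_h,d_m$ with $q\ge2$ and $d_m\le n$, $$A_{MU}(n,q,d_h,d_m)\le\frac{M(n,q,d)}{\lfloor n/d_m\rfloor},\qquad d=\min\{d_h,2d_m\}.$$
   Context: $\Sigma_q=\{0,\dots,q-1\}$, $d_H$ is Hamming distance, and for $\vec a\in\Sigma_q^n$, $\vec a_i^j=(a_i,\dots,a_j)$. A code $\mathcal C\subseteq\Sigma_q^n$ is a $(d_h,d_m)$-MU code if (1) any two distinct codewords are at Hamming distance at least $d_h$, and (2) for every two not necessarily distinct $\vec a,\vec b\in\mathcal C$ and every $i\in[1,n-1]$, $d_H(\vec a_1^i,\vec b_{n-i+1}^n)\ge\min\{i,d_m\}$. $A_{MU}(n,q,d_h,d_m)$ is the largest size of a $(d_h,d_m)$-MU code in $\Sigma_q^n$, and $M(n,q,d)$ is the largest size of a code in $\Sigma_q^n$ with minimum Hamming distance $d$. *)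

theory Defs
  imports Complex_Main
begin

definition words :: "nat \<Rightarrow> nat \<Rightarrow> nat list set" where
  "words q n = {xs. length xs = n \<and> set xs \<subseteq> {..<q}}"

text \<open>Hamming distance (for lists of equal length).\<close>
definition hdist :: "nat list \<Rightarrow> nat list \<Rightarrow> nat" where
  "hdist a b = card {i. i < length a \<and> a ! i \<noteq> b ! i}"

definition dist_code :: "nat \<Rightarrow> nat \<Rightarrow> nat \<Rightarrow> nat list set \<Rightarrow> bool" where
  "dist_code n q d C \<longleftrightarrow> C \<subseteq> words q n \<and>
     (\<forall>a\<in>C. \<forall>b\<in>C. a \<noteq> b \<longrightarrow> hdist a b \<ge> d)"

text \<open>(d_h,d_m)-MU code: prefix a_1^i is take i a, suffix b_{n-i+1}^n is drop (n-i) b.\<close>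
definition MU_code :: "nat \<Rightarrow> nat \<Rightarrow> nat \<Rightarrow> nat \<Rightarrow> nat list set \<Rightarrow> bool" where
  "MU_code n q dh dm C \<longleftrightarrow> dist_code n q dh C \<and>
     (\<forall>a\<in>C. \<forall>b\<in>C. \<forall>i. 1 \<le> i \<and> i \<le> n - 1 \<longrightarrow>
        hdist (take i a) (drop (n - i) b) \<ge> min i dm)"

definition A_MU :: "nat \<Rightarrow> nat \<Rightarrow> nat \<Rightarrow> nat \<Rightarrow> nat" where
  "A_MU n q dh dm = Max {card C | C. MU_code n q dh dm C}"

definition M_code :: "nat \<Rightarrow> nat \<Rightarrow> nat \<Rightarrow> nat" where
  "M_code n q d = Max {card C | C. dist_code n q d C}"

end

theory Submission
  imports Defs
begin

definition hd2 :: "nat list \<Rightarrow> nat list \<Rightarrow> nat" where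
  "hd2 a b = length (filter (\<lambda>(x,y). x \<noteq> y) (zip a b))"

lemma hdist_hd2: "length a = length b \<Longrightarrow> hdist a b = hd2 a b"
  unfolding hdist_def hd2_def length_filter_conv_card by (intro arg_cong[where f=card]) auto

lemma hd2_append: "length xs = length xs' \<Longrightarrow>
  hd2 (xs @ ys) (xs' @ ys') = hd2 xs xs' + hd2 ys ys'"
  unfolding hd2_def by simp

lemma zip_rotate: "length a = length b \<Longrightarrow> zip (rotate s a) (rotate s b) = rotate s (zip a b)"
  by (simp add: rotate_drop_take drop_zip take_zip)

lemma filter_rotate_len: "length (filter P (rotate s xs)) = length (filter P xs)"
proof -
  have "length (filter P xs) = length (filter P (take (s mod length xs) xs @ drop (s mod length xs) xs))"
    by simp
  then show ?thesis by (simp add: rotate_drop_take del: append_take_drop_id)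
qed

lemma hd2_rotate: "length a = length b \<Longrightarrow> hd2 (rotate s a) (rotate s b) = hd2 a b"
  unfolding hd2_def by (simp add: zip_rotate filter_rotate_len)

lemma hdist_sym: "length a = length b \<Longrightarrow> hdist a b = hdist b a"
  unfolding hdist_def by (metis (no_types, lifting))

lemma hd2_sym: "length a = length b \<Longrightarrow> hd2 a b = hd2 b a"
  by (metis hdist_hd2 hdist_sym)

lemma hdist_rotate: "length a = length b \<Longrightarrow> hdist (rotate s a) (rotate s b) = hdist a b"
  by (simp add: hdist_hd2 hd2_rotate)

lemma shift_dist:
  assumes MU: "MU_code n q dh dm C" and a: "a \<in> C" and b: "b \<in> C"
    and jl: "j < l" and lk: "l < n div dm" and dm: "0 < dm"
  shows "2*dm \<le> hdist (rotate (j*dm) a) (rotate (l*dm) b)"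
proof -
  have W: "C \<subseteq> words q n" using MU unfolding MU_code_def dist_code_def by blast
  have la: "length a = n" and lb: "length b = n" using W a b by (auto simp: words_def)
  define u where "u = (l - j) * dm"
  have lsplit: "l*dm = j*dm + u" unfolding u_def using jl by (simp add: diff_mult_distrib mult_le_mono1)
  have udm: "dm \<le> u" unfolding u_def using jl dm by simp
  have "u \<le> l*dm" unfolding u_def by simp
  moreover have "(l+1)*dm \<le> n div dm * dm" using lk by (intro mult_right_mono) auto
  moreover have "n div dm * dm \<le> n" by simp
  moreover have "(l+1)*dm = l*dm + dm" by simp
  ultimately have un: "u + dm \<le> n" by linarith
  have rb: "rotate (l*dm) b = rotate (j*dm) (rotate u b)"
    by (simp add: lsplit rotate_rotate add.commute)
  have lrb: "length (rotate u b) = n" using lb by simp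
  have "hdist (rotate (j*dm) a) (rotate (l*dm) b) = hdist a (rotate u b)"
    using rb hdist_rotate[of a "rotate u b"] la lrb by simp
  also have "rotate u b = drop u b @ take u b"
    using rotate_drop_take[of u b] lb un udm dm by simp
  also have "hdist a (drop u b @ take u b)
     = hd2 (take (n-u) a @ drop (n-u) a) (drop u b @ take u b)"
    using la lb un by (simp add: hdist_hd2)
  also have "\<dots> = hd2 (take (n-u) a) (drop u b) + hd2 (drop (n-u) a) (take u b)"
    using la lb un by (intro hd2_append) simp
  also have "\<dots> = hdist (take (n-u) a) (drop (n - (n-u)) b) + hdist (take u b) (drop (n-u) a)"
    using la lb un by (simp add: hdist_hd2 hd2_sym[of "take u b"])
  finally have eq: "hdist (rotate (j*dm) a) (rotate (l*dm) b) =
     hdist (take (n-u) a) (drop (n - (n-u)) b) + hdist (take u b) (drop (n-u) a)" .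
  have MU2: "\<forall>a\<in>C. \<forall>b\<in>C. \<forall>i. 1 \<le> i \<and> i \<le> n - 1 \<longrightarrow>
        hdist (take i a) (drop (n - i) b) \<ge> min i dm" using MU unfolding MU_code_def by blast
  have i1: "1 \<le> n-u \<and> n-u \<le> n-1" using un udm dm by linarith
  have i2: "1 \<le> u \<and> u \<le> n-1" using un udm dm by linarith
  have "min (n-u) dm \<le> hdist (take (n-u) a) (drop (n - (n-u)) b)"
    using MU2 a b i1 by blast
  moreover have "min u dm \<le> hdist (take u b) (drop (n-u) a)"
    using MU2 a b i2 by blast
  ultimately show ?thesis using eq un udm by simp
qed

lemma finite_words: "finite (words q n)"
proof -
  have "words q n = {xs. set xs \<subseteq> {..<q} \<and> length xs = n}" unfolding words_def by auto
  then show ?thesis using finite_lists_length_eq[of "{..<q}" n] by simp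
qed

lemma hdist_self: "hdist a a = 0"
  unfolding hdist_def by simp

lemma card_bound: "dist_code n q d C \<Longrightarrow> card C \<le> card (words q n)"
  unfolding dist_code_def by (intro card_mono finite_words) auto

lemma M_code_ge: "dist_code n q d C \<Longrightarrow> card C \<le> M_code n q d"
  unfolding M_code_def
  by (rule Max_ge) (auto intro: finite_subset[of _ "{..card (words q n)}"] dest: card_bound)

theorem theorem3:
  fixes n q dh dm :: nat
  assumes "0 < n" "2 \<le> q" "0 < dh" "0 < dm" "dm \<le> n"
  shows "real (A_MU n q dh dm) \<le> real (M_code n q (min dh (2 * dm))) / real (n div dm)"
proof -
  let ?S = "{card C | C. MU_code n q dh dm C}"
  have fin: "finite ?S"
    by (rule finite_subset[of _ "{..card (words q n)}"])
       (auto simp: MU_code_def dest: card_bound)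
  have "MU_code n q dh dm {}" unfolding MU_code_def dist_code_def
    by simp
  then have ne: "?S \<noteq> {}" by blast
  have "A_MU n q dh dm \<in> ?S" unfolding A_MU_def using Max_in[OF fin ne] .
  then obtain C where MU: "MU_code n q dh dm C" and cC: "card C = A_MU n q dh dm" by auto
  have W: "C \<subseteq> words q n" using MU unfolding MU_code_def dist_code_def by blast
  have finC: "finite C" using W finite_words finite_subset by blast
  define k where "k = n div dm"
  have kpos: "0 < k" unfolding k_def using assms by (simp add: div_greater_zero_iff)
  define f where "f = (\<lambda>(a::nat list, j::nat). rotate (j*dm) a)"
  define R where "R = f ` (C \<times> {..<k})"
  have dhC: "\<forall>a\<in>C. \<forall>b\<in>C. a \<noteq> b \<longrightarrow> hdist a b \<ge> dh"
    using MU unfolding MU_code_def dist_code_def by blast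
  have key: "min dh (2*dm) \<le> hdist (f x) (f y)"
    if x: "x \<in> C \<times> {..<k}" and y: "y \<in> C \<times> {..<k}" and xy: "x \<noteq> y" for x y
  proof -
    obtain a j where xa: "x = (a,j)" by (cases x)
    obtain b l where yb: "y = (b,l)" by (cases y)
    have a: "a \<in> C" "j < k" and b: "b \<in> C" "l < k" using x y xa yb by auto
    have la: "length a = n" and lb: "length b = n" using W a b by (auto simp: words_def)
    consider "j = l" | "j < l" | "l < j" by linarith
    then show ?thesis
    proof cases
      case 1
      then have "a \<noteq> b" using xy xa yb by simp
      then have "dh \<le> hdist a b" using dhC a b by blast
      then show ?thesis using 1 xa yb hdist_rotate[of a b "l*dm"] la lb
        by (simp add: f_def)
    next
      case 2
      then show ?thesis using shift_dist[OF MU a(1) b(1) 2] b(2) assms(4) xa yb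
        by (simp add: f_def k_def)
    next
      case 3
      then have "2*dm \<le> hdist (rotate (l*dm) b) (rotate (j*dm) a)"
        using shift_dist[OF MU b(1) a(1) 3] a(2) assms(4) by (simp add: k_def)
      then show ?thesis using hdist_sym[of "rotate (l*dm) b" "rotate (j*dm) a"] la lb xa yb
        by (simp add: f_def)
    qed
  qed
  have inj: "inj_on f (C \<times> {..<k})"
  proof (rule inj_onI)
    fix x y assume "x \<in> C \<times> {..<k}" "y \<in> C \<times> {..<k}" "f x = f y"
    then show "x = y" using key[of x y] assms(3,4) hdist_self[of "f y"] by fastforce
  qed
  have cR: "card R = card C * k" unfolding R_def using card_image[OF inj] finC
    by (simp add: card_cartesian_product)
  have RW: "R \<subseteq> words q n" unfolding R_def f_def using W
    by (auto simp: words_def) blast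
  have "dist_code n q (min dh (2*dm)) R"
    unfolding dist_code_def
  proof (intro conjI RW ballI impI)
    fix u v assume "u \<in> R" "v \<in> R" "u \<noteq> v"
    then obtain x y where "x \<in> C \<times> {..<k}" "y \<in> C \<times> {..<k}" "u = f x" "v = f y"
      unfolding R_def by auto
    then show "min dh (2*dm) \<le> hdist u v" using key \<open>u \<noteq> v\<close> by blast
  qed
  then have "card C * k \<le> M_code n q (min dh (2*dm))" using M_code_ge cR by metis
  then have "real (A_MU n q dh dm) * real k \<le> real (M_code n q (min dh (2*dm)))"
    using cC by (metis of_nat_le_iff of_nat_mult)
  then show ?thesis using kpos by (simp add: k_def pos_le_divide_eq)
qed

end
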